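(* Let $\pi=\mathcal{N}(\mu,Q^{-1})$ and $q=\mathcal{N}(\mu',\widetilde{Q}^{-1})$ be Gaussian distributions on $\mathbb{R}^p$, where $Q$ is positive definite and partitioned into blocks, and $\widetilde{Q}$ is the block-diagonal matrix having the same diagonal blocks as $Q$ and zeros elsewhere. Let $\bar{Q}=\widetilde{Q}^{-1/2}Q\widetilde{Q}^{-1/2}$. Let $k\ne\ell$ be two block indices and $v_k,v_\ell\in\mathbb{R}^p\setminus\{0\}$ vectors such that $v_k$ is zero outside block $k$ and $v_\ell$ is zero outside block $\ell$. Then $$UQF(q\Vert\pi)\le1-\frac{v_k^T\bar{Q}v_\ell}{\|v_k\|\,\|v_\ell\|}.$$
   Context: The uncertainty quantification fraction is $UQF(q\Vert\pi)=\inf_{v\in\mathbb{R}^p\setminus\{0\}}\frac{\mathrm{var}_{q}(\theta^Tv)}{\mathrm{var}_{\pi}(\theta^Tv)}$. Matrix square roots are symmetric positive definite square roots. *)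

theory Defs
  imports "HOL-Analysis.Analysis"
begin

definition posdef :: "real^'n^'n \<Rightarrow> bool" where
  "posdef A \<longleftrightarrow> transpose A = A \<and> (\<forall>x. x \<noteq> 0 \<longrightarrow> x \<bullet> (A *v x) > 0)"

definition msqrt :: "real^'n^'n \<Rightarrow> real^'n^'n" where
  "msqrt A = (THE S. posdef S \<and> S ** S = A)"

text \<open>A Gaussian distribution N(m, Sigma) on R^p, represented by its mean and covariance.\<close>
type_synonym 'n gaussian = "(real^'n) \<times> (real^'n^'n)"

definition gaussian :: "real^'n \<Rightarrow> real^'n^'n \<Rightarrow> 'n gaussian" where
  "gaussian m S = (m, S)"

text \<open>Variance of the linear functional theta^T v under theta ~ N(m, Sigma): v^T Sigma v.\<close>
definition gvar :: "'n gaussian \<Rightarrow> real^'n \<Rightarrow> real" where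
  "gvar g v = v \<bullet> (snd g *v v)"

definition UQF :: "('n::finite) gaussian \<Rightarrow> 'n gaussian \<Rightarrow> real" where
  "UQF q p = Inf {gvar q v / gvar p v | v. v \<noteq> 0}"

definition blockdiag :: "('n \<Rightarrow> 'b) \<Rightarrow> real^'n^'n \<Rightarrow> real^'n^'n" where
  "blockdiag blk Q = (\<chi> i j. if blk i = blk j then Q $ i $ j else 0)"

end

theory Submission
  imports Defs
begin

lemma inv_props:
  fixes A :: "real^'n^'n"
  assumes "invertible A"
  shows "A ** matrix_inv A = mat 1" "matrix_inv A ** A = mat 1"
  using someI_ex[OF assms[unfolded invertible_def]] unfolding matrix_inv_def by auto

lemma inv_unique:
  fixes A B :: "real^'n^'n"
  assumes "A ** B = mat 1"
  shows "matrix_inv A = B" "invertible A"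
proof -
  have BA: "B ** A = mat 1" using assms matrix_left_right_inverse by blast
  show inv: "invertible A" using assms BA invertible_def by blast
  have "matrix_inv A = matrix_inv A ** (A ** B)" by (simp add: assms)
  also have "\<dots> = B" by (simp add: inv_props(2)[OF inv] matrix_mul_assoc)
  finally show "matrix_inv A = B" .
qed

lemma sym_dot:
  fixes A :: "real^'n^'n"
  assumes "transpose A = A"
  shows "x \<bullet> (A *v y) = (A *v x) \<bullet> y"
  by (metis assms dot_lmul_matrix transpose_matrix_vector)

lemma posdef_invertible:
  fixes A :: "real^'n^'n"
  assumes "posdef A" shows "invertible A"
proof -
  have "\<forall>x. A *v x = 0 \<longrightarrow> x = 0" using assms unfolding posdef_def
    by (metis inner_zero_right less_irrefl)
  then show ?thesis using matrix_left_invertible_ker invertible_left_inverse by blast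
qed

lemma posdef_inv:
  fixes A :: "real^'n^'n"
  assumes "posdef A" shows "posdef (matrix_inv A)"
proof -
  have inv: "invertible A" using posdef_invertible assms by blast
  have s: "transpose A = A" using assms posdef_def by blast
  let ?B = "matrix_inv A"
  have "transpose ?B ** A = mat 1"
    by (metis inv inv_props(1) matrix_transpose_mul s transpose_mat)
  then have "transpose ?B = transpose ?B ** (A ** ?B)" by (simp add: inv_props(1)[OF inv])
  also have "\<dots> = ?B" by (metis \<open>transpose ?B ** A = mat 1\<close> matrix_mul_assoc matrix_mul_lid)
  finally have t: "transpose ?B = ?B" .
  have "x \<bullet> (?B *v x) > 0" if "x \<noteq> 0" for x
  proof -
    let ?y = "?B *v x"
    have "A *v ?y = x" by (simp add: inv inv_props(1) matrix_vector_mul_assoc)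
    then have "?y \<noteq> 0" using that by auto
    then have "?y \<bullet> (A *v ?y) > 0" using assms posdef_def by blast
    then show ?thesis using \<open>A *v ?y = x\<close> by (simp add: inner_commute)
  qed
  then show ?thesis using t posdef_def by blast
qed

lemma quad_nonpos_imp:
  fixes c d :: real
  assumes "\<forall>t. 2*t*c + t^2*d \<le> 0" "c \<ge> 0"
  shows "c = 0"
proof (rule ccontr)
  assume "c \<noteq> 0"
  then have c: "c > 0" using assms(2) by simp
  define e where "e = \<bar>d\<bar> + 1"
  have e: "e > 0" "d \<ge> - e + 1" unfolding e_def by auto
  have "2*(c/e)*c + (c/e)^2*d \<le> 0" using assms(1) by blast
  then have "(2*(c/e)*c + (c/e)^2*d) * e^2 \<le> 0" using e
    by (simp add: mult_nonpos_nonneg)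
  moreover have "(2*(c/e)*c + (c/e)^2*d) * e^2 = c^2 * (2*e + d)"
    using e by (simp add: field_simps power2_eq_square)
  moreover have "c^2 * (2*e + d) > 0" using c e by (intro mult_pos_pos) auto
  ultimately show False by linarith
qed

lemma eig_step:
  fixes A :: "real^'n^'n" and B :: "(real^'n) set"
  assumes sym: "transpose A = A"
    and Bn: "\<forall>u\<in>B. norm u = 1 \<and> (\<exists>c. A *v u = c *\<^sub>R u)"
    and Bo: "pairwise orthogonal B" and Bc: "card B < CARD('n)" and Bf: "finite B"
  shows "\<exists>x. norm x = 1 \<and> (\<forall>u\<in>B. u \<bullet> x = 0) \<and> (\<exists>c. A *v x = c *\<^sub>R x)"
proof -
  define W where "W = {x. \<forall>u\<in>B. u \<bullet> x = 0}"
  have "0 \<notin> B" using Bn by force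
  then have ind: "independent B" using Bo pairwise_orthogonal_independent by blast
  have "dim B = card B" using ind dim_eq_card_independent by blast
  then have "dim B < DIM(real^'n)" using Bc by simp
  then obtain a :: "real^'n" where a: "a \<noteq> 0" "span B \<subseteq> {x. a \<bullet> x = 0}"
    using lowdim_subset_hyperplane by blast
  have aW: "a \<in> W" using a span_base unfolding W_def by (fastforce simp: inner_commute)
  have Wadd: "x + t *\<^sub>R y \<in> W" if "x \<in> W" "y \<in> W" for x y t
    using that unfolding W_def by (simp add: inner_add_right)
  define K where "K = W \<inter> sphere 0 1"
  have clW: "closed W" unfolding W_def
    by (simp add: Collect_ball_eq closed_INT closed_hyperplane)
  have cK: "compact K" unfolding K_def using clW compact_sphere
    by (simp add: closed_Int_compact)
  have "(1 / norm a) *\<^sub>R a \<in> K" using a aW unfolding K_def W_def by auto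
  then have neK: "K \<noteq> {}" by blast
  define f where "f x = x \<bullet> (A *v x)" for x
  have "continuous_on K f" unfolding f_def
    by (intro continuous_intros linear_continuous_on) (simp add: bounded_linear_def)
  then obtain x0 where x0: "x0 \<in> K" "\<forall>y\<in>K. f y \<le> f x0"
    using continuous_attains_sup[OF cK neK] by blast
  define l where "l = f x0"
  have x0W: "x0 \<in> W" and nx0: "norm x0 = 1" using x0 unfolding K_def by auto
  have bound: "f z \<le> l * (z \<bullet> z)" if "z \<in> W" for z
  proof (cases "z = 0")
    case True then show ?thesis by (simp add: f_def)
  next
    case False
    let ?z = "(1 / norm z) *\<^sub>R z"
    have "?z \<in> K" using that False unfolding K_def W_def by auto
    then have "f ?z \<le> l" using x0 l_def by blast
    moreover have "f ?z = f z / (norm z)^2"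
      by (simp add: f_def matrix_vector_mult_scaleR power2_eq_square)
    moreover have "(norm z)^2 > 0" using False by simp
    ultimately have "f z \<le> l * (norm z)^2" by (simp add: divide_le_eq)
    then show ?thesis by (simp add: power2_norm_eq_inner)
  qed
  define r where "r = A *v x0 - l *\<^sub>R x0"
  have rW: "r \<in> W" unfolding W_def r_def
  proof safe
    fix u assume "u \<in> B"
    then obtain c where c: "A *v u = c *\<^sub>R u" using Bn by blast
    have "u \<bullet> x0 = 0" using x0W \<open>u \<in> B\<close> unfolding W_def by blast
    moreover have "u \<bullet> (A *v x0) = (A *v u) \<bullet> x0" using sym_dot[OF sym] by blast
    ultimately show "u \<bullet> (A *v x0 - l *\<^sub>R x0) = 0" using c by (simp add: inner_diff_right)
  qed
  have "\<forall>t. 2*t*(r \<bullet> r) + t^2*(f r - l * (r \<bullet> r)) \<le> 0"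
  proof
    fix t :: real
    have e1: "f (x0 + t *\<^sub>R r) \<le> l * ((x0 + t *\<^sub>R r) \<bullet> (x0 + t *\<^sub>R r))"
      using bound Wadd x0W rW by blast
    have e2: "f (x0 + t *\<^sub>R r) = l + 2*t*(r \<bullet> (A *v x0)) + t^2 * f r"
    proof -
      have "x0 \<bullet> (A *v r) = r \<bullet> (A *v x0)"
        using sym_dot[OF sym] inner_commute by metis
      then show ?thesis unfolding f_def l_def
        by (simp add: matrix_vector_right_distrib matrix_vector_mult_scaleR inner_add_left
            inner_add_right algebra_simps power2_eq_square)
    qed
    have e3: "(x0 + t *\<^sub>R r) \<bullet> (x0 + t *\<^sub>R r) = 1 + 2*t*(x0 \<bullet> r) + t^2 * (r \<bullet> r)"
    proof -
      have "x0 \<bullet> x0 = 1" using nx0 norm_eq_1 by blast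
      then show ?thesis unfolding inner_add_left inner_add_right inner_scaleR_left inner_scaleR_right
        by (simp add: inner_commute[of r x0] power2_eq_square algebra_simps)
    qed
    have e4: "r \<bullet> (A *v x0) = r \<bullet> r + l * (x0 \<bullet> r)"
      unfolding r_def by (simp add: inner_diff_right inner_diff_left inner_commute algebra_simps)
    have "l + 2*t*(r \<bullet> r + l * (x0 \<bullet> r)) + t^2 * f r \<le> l * (1 + 2*t*(x0 \<bullet> r) + t^2 * (r \<bullet> r))"
      using e1 e2 e3 e4 by simp
    then show "2*t*(r \<bullet> r) + t^2*(f r - l * (r \<bullet> r)) \<le> 0"
      by (simp add: algebra_simps)
  qed
  then have "r \<bullet> r = 0" using quad_nonpos_imp[of "r \<bullet> r"] by simp
  then have "A *v x0 = l *\<^sub>R x0" unfolding r_def by simp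
  then show ?thesis using nx0 x0W unfolding W_def by blast
qed

lemma mat_eq_on_span:
  fixes M N :: "real^'n^'n"
  assumes "span B = UNIV" "\<forall>u\<in>B. M *v u = N *v u"
  shows "M = N"
proof -
  have "M *v x = N *v x" for x
    by (rule linear_eq_on_span[where B=B]) (use assms in auto)
  then show ?thesis by (simp add: matrix_eq)
qed

lemma mat_sym_from_dot:
  fixes M :: "real^'n^'n"
  assumes "\<forall>x y. x \<bullet> (M *v y) = (M *v x) \<bullet> y"
  shows "transpose M = M"
proof -
  have "transpose M *v x = M *v x" for x
  proof -
    have "\<forall>y. (x v* M) \<bullet> y = (M *v x) \<bullet> y" using assms dot_lmul_matrix by metis
    then show ?thesis using vector_eq_rdot by (metis transpose_matrix_vector)
  qed
  then show ?thesis by (simp add: matrix_eq)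
qed

lemma eig_basis:
  fixes A :: "real^'n^'n"
  assumes sym: "transpose A = A"
  shows "\<exists>B. finite B \<and> pairwise orthogonal B \<and> (\<forall>u\<in>B. norm u = 1 \<and> (\<exists>c. A *v u = c *\<^sub>R u))
     \<and> span B = UNIV"
proof -
  have "\<forall>k. k \<le> CARD('n) \<longrightarrow> (\<exists>B. card B = k \<and> finite B \<and> pairwise orthogonal B \<and>
          (\<forall>u\<in>B. norm u = 1 \<and> (\<exists>c. A *v u = c *\<^sub>R u)))"
  proof
    fix k show "k \<le> CARD('n) \<longrightarrow> (\<exists>B. card B = k \<and> finite B \<and> pairwise orthogonal B \<and>
          (\<forall>u\<in>B. norm u = 1 \<and> (\<exists>c. A *v u = c *\<^sub>R u)))"
    proof (induction k)
      case 0
      show ?case by (intro impI exI[of _ "{}"]) auto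
    next
      case (Suc k)
      show ?case
      proof
        assume "Suc k \<le> CARD('n)"
        then obtain B where B: "card B = k" "finite B" "pairwise orthogonal B"
          "\<forall>u\<in>B. norm u = 1 \<and> (\<exists>c. A *v u = c *\<^sub>R u)" using Suc.IH by auto
        obtain x where x: "norm x = 1" "\<forall>u\<in>B. u \<bullet> x = 0" "\<exists>c. A *v x = c *\<^sub>R x"
          using eig_step[OF sym B(4) B(3)] B(1,2) \<open>Suc k \<le> CARD('n)\<close> by auto
        have xB: "x \<notin> B" using x by (metis inner_eq_zero_iff norm_zero zero_neq_one)
        have "pairwise orthogonal (insert x B)"
          using B(3) x(2) by (auto simp: pairwise_insert orthogonal_def inner_commute)
        then show "\<exists>B. card B = Suc k \<and> finite B \<and> pairwise orthogonal B \<and>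
          (\<forall>u\<in>B. norm u = 1 \<and> (\<exists>c. A *v u = c *\<^sub>R u))"
          using B x xB by (intro exI[of _ "insert x B"]) auto
      qed
    qed
  qed
  then obtain B where B: "card B = CARD('n)" "finite B" "pairwise orthogonal B"
          "\<forall>u\<in>B. norm u = 1 \<and> (\<exists>c. A *v u = c *\<^sub>R u)" by auto
  have "0 \<notin> B" using B(4) by force
  then have ind: "independent B" using B(3) pairwise_orthogonal_independent by blast
  have "card B = dim (UNIV :: (real^'n) set)" using B(1) by simp
  then have "UNIV \<subseteq> span B" using card_eq_dim[of B UNIV] ind B(2) by blast
  then show ?thesis using B by auto
qed

lemma sqrt_unique_exists:
  fixes A :: "real^'n^'n"
  assumes pd: "posdef A"
  shows "\<exists>!S. posdef S \<and> S ** S = A"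
proof -
  have sym: "transpose A = A" using pd posdef_def by blast
  obtain B where B: "finite B" "pairwise orthogonal B" "\<forall>u\<in>B. norm u = 1 \<and> (\<exists>c. A *v u = c *\<^sub>R u)"
    "span B = UNIV" using eig_basis[OF sym] by blast
  define lam where "lam u = u \<bullet> (A *v u)" for u
  have uu: "u \<bullet> u = 1" if "u \<in> B" for u using B(3) that norm_eq_1 by blast
  have orth: "u \<bullet> w = 0" if "u \<in> B" "w \<in> B" "u \<noteq> w" for u w
    using B(2) that unfolding pairwise_def orthogonal_def by blast
  have Au: "A *v u = lam u *\<^sub>R u" if u: "u \<in> B" for u
  proof -
    obtain c where c: "A *v u = c *\<^sub>R u" using B(3) u by blast
    have "lam u = c * (u \<bullet> u)" unfolding lam_def c by simp
    then have "lam u = c" using uu[OF u] by simp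
    then show ?thesis using c by simp
  qed
  have lpos: "lam u > 0" if "u \<in> B" for u
  proof -
    have "u \<noteq> 0" using B(3) that by (metis norm_zero zero_neq_one)
    then show ?thesis using pd unfolding posdef_def lam_def by blast
  qed
  define g where "g x = (\<Sum>u\<in>B. (sqrt (lam u) * (u \<bullet> x)) *\<^sub>R u)" for x
  have lin: "linear g"
  proof (rule linearI)
    fix x y :: "real^'n" and c :: real
    show "g (x + y) = g x + g y" unfolding g_def
      by (simp add: inner_add_right distrib_left scaleR_add_left sum.distrib)
    show "g (c *\<^sub>R x) = c *\<^sub>R g x" unfolding g_def
      by (simp add: scaleR_sum_right) (rule sum.cong, simp_all add: algebra_simps)
  qed
  define S where "S = matrix g"
  have Sx: "S *v x = g x" for x unfolding S_def using matrix_works[of g] lin by (simp add: linear_matrix_vector_mul_eq)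
  have gw: "g w = sqrt (lam w) *\<^sub>R w" if "w \<in> B" for w
  proof -
    have "g w = (\<Sum>u\<in>B. if u = w then sqrt (lam w) *\<^sub>R w else 0)"
      unfolding g_def by (rule sum.cong) (auto simp: uu orth that)
    then show ?thesis using B(1) that by simp
  qed
  have SS: "S ** S = A"
  proof (rule mat_eq_on_span[OF B(4)], intro ballI)
    fix w assume w: "w \<in> B"
    have "(S ** S) *v w = S *v (S *v w)" by (simp add: matrix_vector_mul_assoc)
    also have "\<dots> = sqrt (lam w) *\<^sub>R (sqrt (lam w) *\<^sub>R w)"
      using Sx gw w by (simp add: matrix_vector_mult_scaleR)
    also have "\<dots> = A *v w" using Au w lpos[OF w] by simp
    finally show "(S ** S) *v w = A *v w" .
  qed
  have dotS: "x \<bullet> (S *v y) = (\<Sum>u\<in>B. sqrt (lam u) * (u \<bullet> y) * (u \<bullet> x))" for x y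
    unfolding Sx g_def by (simp add: inner_sum_right inner_commute)
  have symS: "transpose S = S"
  proof (rule mat_sym_from_dot, intro allI)
    fix x y :: "real^'n"
    have "(S *v x) \<bullet> y = y \<bullet> (S *v x)" by (rule inner_commute)
    then show "x \<bullet> (S *v y) = (S *v x) \<bullet> y" unfolding dotS
      by (simp add: mult_ac)
  qed
  have pdS: "x \<bullet> (S *v x) > 0" if "x \<noteq> 0" for x
  proof -
    obtain u where u: "u \<in> B" "u \<bullet> x \<noteq> 0"
    proof (rule ccontr)
      assume "\<not> thesis"
      then have "\<forall>u\<in>B. u \<bullet> x = 0" using that by blast
      then have "\<forall>u\<in>B. orthogonal x u" by (simp add: orthogonal_def inner_commute)
      then have "orthogonal x x" using orthogonal_to_span B(4) by blast
      then show False using \<open>x \<noteq> 0\<close> by (simp add: orthogonal_def)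
    qed
    have "0 < (\<Sum>u\<in>B. sqrt (lam u) * (u \<bullet> x) * (u \<bullet> x))"
    proof (rule sum_pos2[of B u])
      show "0 < sqrt (lam u) * (u \<bullet> x) * (u \<bullet> x)"
        using u lpos[OF u(1)] by (metis mult.assoc mult_pos_pos not_real_square_gt_zero real_sqrt_gt_zero)
      show "0 \<le> sqrt (lam i) * (i \<bullet> x) * (i \<bullet> x)" if "i \<in> B" for i
        using lpos[OF that] by (simp add: mult.assoc)
    qed (use u B(1) in auto)
    then show ?thesis using dotS by simp
  qed
  have PS: "posdef S" using symS pdS posdef_def by blast
  have uniq: "T = S" if T: "posdef T" "T ** T = A" for T
  proof (rule mat_eq_on_span[OF B(4)], intro ballI)
    fix u assume u: "u \<in> B"
    define s where "s = sqrt (lam u)"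
    have s: "s > 0" "s * s = lam u" using lpos[OF u] unfolding s_def by auto
    define w where "w = T *v u - s *\<^sub>R u"
    have TTu: "T *v (T *v u) = lam u *\<^sub>R u"
      using T(2) Au[OF u] by (metis matrix_vector_mul_assoc)
    have "T *v w = T *v (T *v u) - s *\<^sub>R (T *v u)"
      unfolding w_def by (simp only: matrix_vector_mult_diff_distrib matrix_vector_mult_scaleR)
    also have "\<dots> = (s * s) *\<^sub>R u - s *\<^sub>R (T *v u)" using TTu s(2) by simp
    also have "\<dots> = - (s *\<^sub>R w)" unfolding w_def by (simp add: algebra_simps)
    finally have Tw: "T *v w = - (s *\<^sub>R w)" .
    have "w = 0"
    proof (rule ccontr)
      assume "w \<noteq> 0"
      then have "w \<bullet> (T *v w) > 0" using T(1) posdef_def by blast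
      moreover have "w \<bullet> (T *v w) = - s * (w \<bullet> w)" using Tw by simp
      moreover have "w \<bullet> w \<ge> 0" by simp
      moreover have "s * (w \<bullet> w) \<ge> 0" using s(1) by simp
      ultimately show False by linarith
    qed
    then show "T *v u = S *v u" using Sx gw u unfolding w_def s_def by simp
  qed
  show ?thesis using PS SS uniq by blast
qed

lemma msqrt_props:
  fixes A :: "real^'n^'n"
  assumes "posdef A"
  shows "posdef (msqrt A)" "msqrt A ** msqrt A = A"
    "\<And>T. posdef T \<Longrightarrow> T ** T = A \<Longrightarrow> T = msqrt A"
proof -
  have "posdef (msqrt A) \<and> msqrt A ** msqrt A = A"
    unfolding msqrt_def using theI'[OF sqrt_unique_exists[OF assms]] .
  then show "posdef (msqrt A)" "msqrt A ** msqrt A = A" by auto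
  show "T = msqrt A" if "posdef T" "T ** T = A" for T
    unfolding msqrt_def
    by (rule the1_equality[OF sqrt_unique_exists[OF assms], symmetric]) (use that in simp)
qed

lemma quad_form_expand:
  fixes M :: "real^'n^'n"
  shows "x \<bullet> (M *v y) = (\<Sum>i\<in>UNIV. \<Sum>j\<in>UNIV. x$i * M$i$j * y$j)"
  by (simp add: inner_vec_def matrix_vector_mult_def sum_distrib_left mult.assoc)

lemma sym_entry:
  fixes Q :: "real^'n^'n"
  assumes "transpose Q = Q" shows "Q$j$i = Q$i$j"
  using assms unfolding transpose_def by (metis vec_lambda_beta)

lemma blockdiag_sym:
  fixes Q :: "real^'n^'n"
  assumes "transpose Q = Q" shows "transpose (blockdiag blk Q) = blockdiag blk Q"
  using sym_entry[OF assms] unfolding blockdiag_def transpose_def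
  by (simp add: vec_eq_iff eq_commute)

definition proj :: "('n \<Rightarrow> 'b) \<Rightarrow> 'b \<Rightarrow> real^'n \<Rightarrow> real^'n" where
  "proj blk c x = (\<chi> i. if blk i = c then x$i else 0)"

lemma blockdiag_quad:
  fixes Q :: "real^'n^'n" and blk :: "'n \<Rightarrow> 'b"
  shows "x \<bullet> (blockdiag blk Q *v x) = (\<Sum>c\<in>range blk. proj blk c x \<bullet> (Q *v proj blk c x))"
proof -
  have ind: "(\<Sum>c\<in>range blk. (if blk i = c then 1 else 0) * (if blk j = c then 1 else (0::real)))
      = (if blk i = blk j then 1 else 0)" for i j
  proof -
    have "(\<Sum>c\<in>range blk. (if blk i = c then 1 else 0) * (if blk j = c then 1 else (0::real)))
        = (\<Sum>c\<in>range blk. if c = blk i then (if blk j = blk i then 1 else 0) else 0)"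
      by (rule sum.cong) auto
    also have "\<dots> = (if blk i = blk j then 1 else 0)" by (simp add: eq_commute)
    finally show ?thesis .
  qed
  have "(\<Sum>c\<in>range blk. proj blk c x \<bullet> (Q *v proj blk c x))
      = (\<Sum>c\<in>range blk. \<Sum>i\<in>UNIV. \<Sum>j\<in>UNIV. x$i * Q$i$j * x$j *
           ((if blk i = c then 1 else 0) * (if blk j = c then 1 else 0)))"
    unfolding quad_form_expand proj_def by (intro sum.cong refl) auto
  also have "\<dots> = (\<Sum>i\<in>UNIV. \<Sum>j\<in>UNIV. \<Sum>c\<in>range blk. x$i * Q$i$j * x$j *
           ((if blk i = c then 1 else 0) * (if blk j = c then 1 else 0)))"
    by (rule trans[OF sum.swap], intro sum.cong refl sum.swap)
  also have "\<dots> = (\<Sum>i\<in>UNIV. \<Sum>j\<in>UNIV. x$i * Q$i$j * x$j * (if blk i = blk j then 1 else 0))"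
    by (simp add: sum_distrib_left[symmetric] ind del: mult_1_right)
  also have "\<dots> = x \<bullet> (blockdiag blk Q *v x)"
    unfolding quad_form_expand blockdiag_def by (intro sum.cong refl) auto
  finally show ?thesis by simp
qed

lemma blockdiag_posdef:
  fixes Q :: "real^'n^'n" and blk :: "'n \<Rightarrow> 'b"
  assumes "posdef Q" shows "posdef (blockdiag blk Q)"
proof -
  have sym: "transpose Q = Q" and pd: "\<And>x. x \<noteq> 0 \<Longrightarrow> x \<bullet> (Q *v x) > 0"
    using assms posdef_def by blast+
  have nn: "y \<bullet> (Q *v y) \<ge> 0" for y
    using pd[of y] by (cases "y = 0") auto
  have "x \<bullet> (blockdiag blk Q *v x) > 0" if nz: "x \<noteq> 0" for x
  proof -
    obtain i where i: "x$i \<noteq> 0" using nz by (auto simp: vec_eq_iff)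
    have "(proj blk (blk i) x)$i = x$i" by (simp add: proj_def)
    then have "proj blk (blk i) x \<noteq> 0" using i by auto
    then have "proj blk (blk i) x \<bullet> (Q *v proj blk (blk i) x) > 0" using pd by blast
    then have "(\<Sum>c\<in>range blk. proj blk c x \<bullet> (Q *v proj blk c x)) > 0"
      by (intro sum_pos2[of _ "blk i"]) (auto simp: nn)
    then show ?thesis by (simp add: blockdiag_quad)
  qed
  then show ?thesis using blockdiag_sym[OF sym] posdef_def by blast
qed

definition reflm :: "('n \<Rightarrow> 'b) \<Rightarrow> 'b \<Rightarrow> real^'n^'n" where
  "reflm blk c = (\<chi> i j. if i = j then (if blk i = c then -1 else 1) else 0)"

definition rsign :: "('n \<Rightarrow> 'b) \<Rightarrow> 'b \<Rightarrow> 'n \<Rightarrow> real" where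
  "rsign blk c i = (if blk i = c then -1 else 1)"

lemma reflm_entry: "reflm blk c $ i $ k = (if k = i then rsign blk c i else 0)"
  by (simp add: reflm_def rsign_def)

lemma reflm_left: "(reflm blk c ** M) $ i $ j = rsign blk c i * M $ i $ j"
proof -
  have "(reflm blk c ** M) $ i $ j = (\<Sum>k\<in>UNIV. reflm blk c $ i $ k * M $ k $ j)"
    by (simp add: matrix_matrix_mult_def)
  also have "\<dots> = (\<Sum>k\<in>UNIV. if k = i then rsign blk c i * M $ k $ j else 0)"
    by (rule sum.cong) (simp_all add: reflm_entry)
  finally show ?thesis by simp
qed

lemma reflm_right: "(M ** reflm blk c) $ i $ j = M $ i $ j * rsign blk c j"
proof -
  have "(M ** reflm blk c) $ i $ j = (\<Sum>k\<in>UNIV. M $ i $ k * reflm blk c $ k $ j)"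
    by (simp add: matrix_matrix_mult_def)
  also have "\<dots> = (\<Sum>k\<in>UNIV. if k = j then M $ i $ k * rsign blk c j else 0)"
    by (rule sum.cong) (auto simp add: reflm_entry)
  finally show ?thesis by simp
qed

lemma reflm_vec: "(reflm blk c *v x) $ i = rsign blk c i * x $ i"
proof -
  have "(reflm blk c *v x) $ i = (\<Sum>k\<in>UNIV. reflm blk c $ i $ k * x $ k)"
    by (simp add: matrix_vector_mult_def)
  also have "\<dots> = (\<Sum>k\<in>UNIV. if k = i then rsign blk c i * x $ k else 0)"
    by (rule sum.cong) (simp_all add: reflm_entry)
  finally show ?thesis by simp
qed

lemma rsign_sq: "rsign blk c i * rsign blk c i = 1"
  by (simp add: rsign_def)

lemma reflm_sq: "reflm blk c ** reflm blk c = mat 1"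
  unfolding vec_eq_iff reflm_left by (simp add: reflm_entry mat_def rsign_def)

lemma reflm_transpose: "transpose (reflm blk c) = reflm blk c"
  by (simp add: vec_eq_iff reflm_def transpose_def)

lemma reflm_blockdiag: "reflm blk c ** blockdiag blk Q ** reflm blk c = blockdiag blk Q"
  unfolding vec_eq_iff reflm_left reflm_right by (simp add: blockdiag_def rsign_def)

lemma mva3: "(A ** B ** C) *v x = A *v (B *v (C *v (x::real^'n)))"
  for A B C :: "real^'n^'n"
  by (simp only: matrix_vector_mul_assoc matrix_mul_assoc)

lemma msqrt_reflm:
  fixes P :: "real^'n^'n"
  assumes pd: "posdef P" and RP: "reflm blk c ** P ** reflm blk c = P"
  shows "reflm blk c ** msqrt P ** reflm blk c = msqrt P"
proof -
  let ?R = "reflm blk c" and ?S = "msqrt P"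
  have S: "posdef ?S" "?S ** ?S = P" using msqrt_props(1,2)[OF pd] by auto
  have symS: "transpose ?S = ?S" using S posdef_def by blast
  have "transpose (?R ** ?S ** ?R) = ?R ** ?S ** ?R"
    by (simp add: matrix_transpose_mul reflm_transpose symS matrix_mul_assoc)
  moreover have "x \<bullet> ((?R ** ?S ** ?R) *v x) > 0" if "x \<noteq> 0" for x
  proof -
    have "?R *v (?R *v x) = x" by (simp add: matrix_vector_mul_assoc reflm_sq)
    then have "?R *v x \<noteq> 0" using that by auto
    then have "(?R *v x) \<bullet> (?S *v (?R *v x)) > 0" using S posdef_def by blast
    moreover have "x \<bullet> (?R *v (?S *v (?R *v x))) = (?R *v x) \<bullet> (?S *v (?R *v x))"
      by (rule sym_dot[OF reflm_transpose])
    ultimately show ?thesis by (simp add: mva3)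
  qed
  ultimately have "posdef (?R ** ?S ** ?R)" using posdef_def by blast
  moreover have "(?R ** ?S ** ?R) ** (?R ** ?S ** ?R) = P"
  proof -
    have "(?R ** ?S ** ?R) ** (?R ** ?S ** ?R) = ?R ** ?S ** (?R ** ?R) ** ?S ** ?R"
      by (simp add: matrix_mul_assoc)
    also have "\<dots> = ?R ** (?S ** ?S) ** ?R" by (simp add: reflm_sq matrix_mul_assoc)
    also have "\<dots> = P" using S(2) RP by simp
    finally show ?thesis .
  qed
  ultimately show ?thesis by (rule msqrt_props(3)[OF pd])
qed

lemma reflm_inv:
  fixes D :: "real^'n^'n"
  assumes "invertible D" "reflm blk c ** D ** reflm blk c = D"
  shows "reflm blk c ** matrix_inv D ** reflm blk c = matrix_inv D"
proof -
  let ?R = "reflm blk c"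
  have "(?R ** D ** ?R) ** (?R ** matrix_inv D ** ?R) = ?R ** (D ** (?R ** ?R) ** matrix_inv D) ** ?R"
    by (simp add: matrix_mul_assoc)
  also have "\<dots> = mat 1"
    by (simp add: reflm_sq inv_props(1)[OF assms(1)] matrix_mul_assoc)
  finally have "D ** (?R ** matrix_inv D ** ?R) = mat 1" using assms(2) by simp
  then show ?thesis by (rule inv_unique(1)[symmetric])
qed

lemma mv_neg: "(M::real^'n^'m) *v (- x) = - (M *v x)"
  using matrix_vector_mult_scaleR[of M "-1" x] by simp

lemma S_block:
  fixes Q :: "real^'n^'n" and blk :: "'n \<Rightarrow> 'b" and a :: "real^'n"
  assumes pd: "posdef Q" and a: "\<forall>i. blk i \<noteq> k \<longrightarrow> a$i = 0"
  shows "\<forall>i. blk i \<noteq> k \<longrightarrow> (msqrt (matrix_inv (blockdiag blk Q)) *v a)$i = 0"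
proof -
  let ?D = "blockdiag blk Q"
  let ?S = "msqrt (matrix_inv ?D)"
  let ?R = "reflm blk k"
  have pD: "posdef ?D" using blockdiag_posdef[OF pd] .
  have iD: "invertible ?D" using posdef_invertible[OF pD] .
  have pP: "posdef (matrix_inv ?D)" using posdef_inv[OF pD] .
  have RP: "?R ** matrix_inv ?D ** ?R = matrix_inv ?D"
    using reflm_inv[OF iD reflm_blockdiag] .
  have RS: "?R ** ?S ** ?R = ?S" using msqrt_reflm[OF pP RP] .
  have Ra: "?R *v a = - a"
    using a by (auto simp: vec_eq_iff reflm_vec rsign_def)
  have "?S *v a = ?R *v (?S *v (?R *v a))" using RS mva3 by metis
  also have "\<dots> = ?R *v (?S *v (- a))" by (simp only: Ra)
  also have "\<dots> = - (?R *v (?S *v a))" by (simp only: mv_neg)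
  finally have eq: "?S *v a = - (?R *v (?S *v a))" .
  show ?thesis
  proof (intro allI impI)
    fix i assume "blk i \<noteq> k"
    have "(?S *v a)$i = - ((?R *v (?S *v a))$i)"
      using arg_cong[where f="\<lambda>v. v$i", OF eq] by (simp only: vector_uminus_component)
    also have "\<dots> = - ((?S *v a)$i)" using \<open>blk i \<noteq> k\<close> by (simp add: reflm_vec rsign_def)
    finally show "(?S *v a)$i = 0" by simp
  qed
qed

lemma block_quad_eq:
  fixes Q :: "real^'n^'n" and blk :: "'n \<Rightarrow> 'b" and y :: "real^'n"
  assumes "\<forall>i. blk i \<noteq> k \<longrightarrow> y$i = 0"
  shows "y \<bullet> (Q *v y) = y \<bullet> (blockdiag blk Q *v y)"
  unfolding quad_form_expand
proof (intro sum.cong refl)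
  fix i j
  show "y $ i * Q $ i $ j * y $ j = y $ i * blockdiag blk Q $ i $ j * y $ j"
  proof (cases "blk i = blk j")
    case True then show ?thesis by (simp add: blockdiag_def)
  next
    case False
    then have "blk i \<noteq> k \<or> blk j \<noteq> k" by auto
    then have "y $ i = 0 \<or> y $ j = 0" using assms by blast
    then show ?thesis by auto
  qed
qed

lemma cs_posdef:
  fixes A :: "real^'n^'n"
  assumes pd: "posdef A"
  shows "(u \<bullet> u)^2 \<le> (u \<bullet> (A *v u)) * (u \<bullet> (matrix_inv A *v u))"
proof -
  have sym: "transpose A = A" using pd posdef_def by blast
  have iA: "invertible A" using posdef_invertible[OF pd] .
  define z where "z = matrix_inv A *v u"
  have Az: "A *v z = u" unfolding z_def by (simp add: matrix_vector_mul_assoc inv_props(1)[OF iA])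
  define al where "al = u \<bullet> (A *v u)"
  define be where "be = u \<bullet> u"
  define ga where "ga = z \<bullet> (A *v z)"
  have gaz: "ga = u \<bullet> (matrix_inv A *v u)" unfolding ga_def Az by (simp add: z_def inner_commute)
  have zAu: "z \<bullet> (A *v u) = be" using sym_dot[OF sym, of z u] Az be_def by (simp add: inner_commute)
  have uAz: "u \<bullet> (A *v z) = be" using Az be_def by simp
  have quad: "(u - t *\<^sub>R z) \<bullet> (A *v (u - t *\<^sub>R z)) = al - 2*t*be + t^2*ga" for t
    unfolding al_def ga_def
    by (simp add: matrix_vector_mult_diff_distrib matrix_vector_mult_scaleR inner_diff_left
        inner_diff_right zAu uAz algebra_simps power2_eq_square)
  have nn: "x \<bullet> (A *v x) \<ge> 0" for x
    using pd unfolding posdef_def by (cases "x = 0") (auto simp: less_imp_le)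
  show ?thesis
  proof (cases "ga = 0")
    case True
    then have "z = 0" using pd unfolding posdef_def ga_def by force
    then have "u = 0" using Az by simp
    then show ?thesis by simp
  next
    case False
    then have gp: "ga > 0" using nn[of z] ga_def by simp
    have "0 \<le> al - 2*(be/ga)*be + (be/ga)^2*ga" using quad[of "be/ga"] nn by metis
    also have "\<dots> = al - be^2/ga" using gp by (simp add: field_simps power2_eq_square)
    finally have "be^2 / ga \<le> al" by simp
    then have "be^2 \<le> al * ga" using gp by (simp add: divide_le_eq)
    then show ?thesis unfolding be_def al_def gaz .
  qed
qed

theorem mainTheorem7:
  fixes Q :: "real^'n^'n" and mu mu' :: "real^'n" and blk :: "'n \<Rightarrow> 'b"
    and k l :: 'b and vk vl :: "real^'n"
  assumes "posdef Q"
    and "k \<noteq> l"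
    and "vk \<noteq> 0" and "vl \<noteq> 0"
    and "\<forall>i. blk i \<noteq> k \<longrightarrow> vk $ i = 0"
    and "\<forall>i. blk i \<noteq> l \<longrightarrow> vl $ i = 0"
  shows "UQF (gaussian mu' (matrix_inv (blockdiag blk Q))) (gaussian mu (matrix_inv Q))
    \<le> 1 - (vk \<bullet> ((msqrt (matrix_inv (blockdiag blk Q)) ** Q ** msqrt (matrix_inv (blockdiag blk Q))) *v vl))
          / (norm vk * norm vl)"
proof -
  note pdQ = assms(1)
  define D where "D = blockdiag blk Q"
  define Di where "Di = matrix_inv D"
  define S where "S = msqrt Di"
  define Si where "Si = matrix_inv S"
  define Qi where "Qi = matrix_inv Q"
  define A where "A = S ** Q ** S"
  have pD: "posdef D" unfolding D_def using blockdiag_posdef[OF pdQ] .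
  have iD: "invertible D" using posdef_invertible[OF pD] .
  have pDi: "posdef Di" unfolding Di_def using posdef_inv[OF pD] .
  have pS: "posdef S" and SS: "S ** S = Di" unfolding S_def using msqrt_props(1,2)[OF pDi] by auto
  have symS: "transpose S = S" using pS posdef_def by blast
  have iS: "invertible S" using posdef_invertible[OF pS] .
  have pSi: "posdef Si" unfolding Si_def using posdef_inv[OF pS] .
  have symSi: "transpose Si = Si" using pSi posdef_def by blast
  have SSi: "S ** Si = mat 1" unfolding Si_def using inv_props(1)[OF iS] .
  have DDi: "D ** Di = mat 1" unfolding Di_def using inv_props(1)[OF iD] .
  have iQ: "invertible Q" using posdef_invertible[OF pdQ] .
  have QQi: "Q ** Qi = mat 1" unfolding Qi_def using inv_props(1)[OF iQ] .
  have pQi: "posdef Qi" unfolding Qi_def using posdef_inv[OF pdQ] .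
  have symQ: "transpose Q = Q" using pdQ posdef_def by blast
  have SDS: "S ** D ** S = mat 1"
  proof -
    have "S ** D ** S = (S ** D ** S) ** (S ** Si)" using SSi by simp
    also have "\<dots> = (S ** (D ** (S ** S))) ** Si" by (simp add: matrix_mul_assoc)
    also have "\<dots> = S ** Si" using SS DDi by simp
    finally show ?thesis using SSi by simp
  qed
  have symA: "transpose A = A" unfolding A_def
    by (simp add: matrix_transpose_mul symS symQ matrix_mul_assoc)
  have Ax: "x \<bullet> (A *v x) = (S *v x) \<bullet> (Q *v (S *v x))" for x
  proof -
    have "x \<bullet> (A *v x) = x \<bullet> (S *v (Q *v (S *v x)))" unfolding A_def by (simp only: mva3)
    also have "\<dots> = (S *v x) \<bullet> (Q *v (S *v x))" by (rule sym_dot[OF symS])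
    finally show ?thesis .
  qed
  have pA: "posdef A"
  proof -
    have "x \<bullet> (A *v x) > 0" if "x \<noteq> 0" for x
    proof -
      have "Si *v (S *v x) = x"
        using inv_props(2)[OF iS] unfolding Si_def by (simp add: matrix_vector_mul_assoc)
      then have "S *v x \<noteq> 0" using that by auto
      then show ?thesis using pdQ Ax unfolding posdef_def by simp
    qed
    then show ?thesis using symA posdef_def by blast
  qed
  have Ainv: "matrix_inv A = Si ** Qi ** Si"
  proof (rule inv_unique(1))
    have "A ** (Si ** Qi ** Si) = S ** (Q ** (S ** Si) ** Qi) ** Si"
      unfolding A_def by (simp add: matrix_mul_assoc)
    also have "\<dots> = mat 1" using SSi QQi by simp
    finally show "A ** (Si ** Qi ** Si) = mat 1" .
  qed
  define a where "a = (1 / norm vk) *\<^sub>R vk"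
  define b where "b = (1 / norm vl) *\<^sub>R vl"
  have asupp: "\<forall>i. blk i \<noteq> k \<longrightarrow> a$i = 0" using assms(5) unfolding a_def by simp
  have bsupp: "\<forall>i. blk i \<noteq> l \<longrightarrow> b$i = 0" using assms(6) unfolding b_def by simp
  have "norm a = 1" unfolding a_def using assms(3) by simp
  then have aa: "a \<bullet> a = 1" using norm_eq_1 by blast
  have "norm b = 1" unfolding b_def using assms(4) by simp
  then have bb: "b \<bullet> b = 1" using norm_eq_1 by blast
  have ab: "a \<bullet> b = 0"
  proof -
    have "a \<bullet> b = (\<Sum>i\<in>UNIV. a$i * b$i)" by (simp add: inner_vec_def)
    also have "\<dots> = 0"
    proof (rule sum.neutral, intro ballI)
      fix i show "a$i * b$i = 0"
        using asupp bsupp assms(2) by (cases "blk i = k") auto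
    qed
    finally show ?thesis .
  qed
  have unitq: "y \<bullet> (A *v y) = 1" if ysupp: "\<forall>i. blk i \<noteq> c \<longrightarrow> y$i = 0" and yy: "y \<bullet> y = 1" for y c
  proof -
    have Sy: "\<forall>i. blk i \<noteq> c \<longrightarrow> (S *v y)$i = 0"
      unfolding S_def Di_def D_def using S_block[OF pdQ ysupp] .
    have "y \<bullet> (A *v y) = (S *v y) \<bullet> (Q *v (S *v y))" by (rule Ax)
    also have "\<dots> = (S *v y) \<bullet> (D *v (S *v y))"
      unfolding D_def using block_quad_eq[OF Sy] .
    also have "\<dots> = y \<bullet> (S *v (D *v (S *v y)))" by (rule sym_dot[OF symS, symmetric])
    also have "\<dots> = y \<bullet> ((S ** D ** S) *v y)" by (simp only: mva3)
    also have "\<dots> = 1" using SDS yy by simp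
    finally show ?thesis .
  qed
  have aAa: "a \<bullet> (A *v a) = 1" using unitq[OF asupp aa] .
  have bAb: "b \<bullet> (A *v b) = 1" using unitq[OF bsupp bb] .
  have bAa: "b \<bullet> (A *v a) = a \<bullet> (A *v b)"
    using sym_dot[OF symA, of b a] by (simp add: inner_commute)
  define u where "u = a - b"
  have uu: "u \<bullet> u = 2" unfolding u_def
    by (simp add: inner_diff_left inner_diff_right aa bb ab inner_commute[of b a])
  have uAu: "u \<bullet> (A *v u) = 2 - 2 * (a \<bullet> (A *v b))" unfolding u_def
    by (simp add: matrix_vector_mult_diff_distrib inner_diff_left inner_diff_right aAa bAb bAa)
  have aAb: "a \<bullet> (A *v b) = (vk \<bullet> (A *v vl)) / (norm vk * norm vl)"
    unfolding a_def b_def by (simp add: matrix_vector_mult_scaleR)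
  define v where "v = Si *v u"
  have Sv: "S *v v = u" unfolding v_def using SSi by (simp add: matrix_vector_mul_assoc)
  have "u \<noteq> 0" using uu by auto
  then have v0: "v \<noteq> 0" using Sv by auto
  have gq: "gvar (gaussian mu' (matrix_inv (blockdiag blk Q))) v = u \<bullet> u"
  proof -
    have "gvar (gaussian mu' (matrix_inv (blockdiag blk Q))) v = v \<bullet> (Di *v v)"
      unfolding gvar_def gaussian_def Di_def D_def by simp
    also have "\<dots> = v \<bullet> (S *v (S *v v))" using SS by (simp add: matrix_vector_mul_assoc)
    also have "\<dots> = u \<bullet> u" using sym_dot[OF symS, of v "S *v v"] Sv by simp
    finally show ?thesis .
  qed
  have gp: "gvar (gaussian mu (matrix_inv Q)) v = u \<bullet> (matrix_inv A *v u)"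
  proof -
    have "gvar (gaussian mu (matrix_inv Q)) v = v \<bullet> (Qi *v v)"
      unfolding gvar_def gaussian_def Qi_def by simp
    also have "\<dots> = u \<bullet> (Si *v (Qi *v (Si *v u)))"
      unfolding v_def using sym_dot[OF symSi, of u "Qi *v (Si *v u)"] by (simp add: inner_commute)
    also have "\<dots> = u \<bullet> (matrix_inv A *v u)" unfolding Ainv by (simp only: mva3)
    finally show ?thesis .
  qed
  have pAi: "posdef (matrix_inv A)" using posdef_inv[OF pA] .
  have uAiu: "u \<bullet> (matrix_inv A *v u) > 0" using pAi \<open>u \<noteq> 0\<close> posdef_def by blast
  let ?q = "gaussian mu' (matrix_inv (blockdiag blk Q))"
  let ?p = "gaussian mu (matrix_inv Q)"
  have bdd: "bdd_below {gvar ?q w / gvar ?p w | w. w \<noteq> 0}"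
  proof (rule bdd_belowI[of _ 0], clarify)
    fix w :: "real^'n" assume "w \<noteq> 0"
    have "gvar ?q w > 0" using pDi \<open>w \<noteq> 0\<close> unfolding gvar_def gaussian_def Di_def D_def posdef_def by simp
    moreover have "gvar ?p w > 0" using pQi \<open>w \<noteq> 0\<close> unfolding gvar_def gaussian_def Qi_def posdef_def by simp
    ultimately show "0 \<le> gvar ?q w / gvar ?p w" by simp
  qed
  have "UQF ?q ?p \<le> gvar ?q v / gvar ?p v"
    unfolding UQF_def by (rule cInf_lower) (use v0 bdd in auto)
  also have "\<dots> = (u \<bullet> u) / (u \<bullet> (matrix_inv A *v u))" using gq gp by simp
  also have "\<dots> \<le> (u \<bullet> (A *v u)) / (u \<bullet> u)"
  proof -
    have "(u \<bullet> u)^2 \<le> (u \<bullet> (A *v u)) * (u \<bullet> (matrix_inv A *v u))" using cs_posdef[OF pA] .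
    then show ?thesis using uAiu uu by (simp add: divide_le_eq le_divide_eq power2_eq_square mult.commute)
  qed
  also have "\<dots> = 1 - (vk \<bullet> (A *v vl)) / (norm vk * norm vl)"
    using uu uAu aAb by simp
  finally show ?thesis unfolding A_def S_def Di_def D_def .
qed

end
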